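(* Let $(m,n)$ be coprime positive integers, $\gamma\in D_{m,n}$, and let $\gamma^*\in D_{m+n,n}$ be obtained by inserting one horizontal unit step immediately after each vertical step of $\gamma$. Then $|O(\gamma^* )|=|O(\gamma)|+\frac{n(n-1)}{2}$ and $\mathrm{area}(\gamma)=\mathrm{area}(\gamma^* )$.
   Context: For coprime positive $(m,n)$, an $(m,n)$-Dyck path is a lattice path from $(0,0)$ to $(m,n)$ of $m$ horizontal unit steps and $n$ vertical unit steps lying weakly above $y=(n/m)x$; $D_{m,n}$ is the set of them. $\mathrm{area}(\gamma)$ is the number of complete unit lattice squares between $\gamma$ and its diagonal ($y=(n/m)x$ for $\gamma\in D_{m,n}$, $y=(n/(m+n))x$ for $\gamma^*\in D_{m+n,n}$). $O(\gamma)$ is the set of pairs $(r_h,r_v)$ with $r_h$ a horizontal step and $r_v$ a vertical step of $\gamma$, $r_v$ appearing after $r_h$. *)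

theory Defs
  imports Main
begin

datatype step = H | V

definition cntH :: "step list \<Rightarrow> nat" where
  "cntH p = length (filter (\<lambda>s. s = H) p)"

definition cntV :: "step list \<Rightarrow> nat" where
  "cntV p = length (filter (\<lambda>s. s = V) p)"

text \<open>(m,n)-Dyck paths: m horizontal and n vertical unit steps from (0,0), every lattice
  point (a,b) visited satisfies b \<ge> (n/m) a, i.e. b*m \<ge> n*a (checking vertices suffices
  since the path is piecewise linear and the half-plane is convex).\<close>
definition dyck :: "nat \<Rightarrow> nat \<Rightarrow> step list set" where
  "dyck m n = {p. cntH p = m \<and> cntV p = n \<and>
     (\<forall>k\<le>length p. n * cntH (take k p) \<le> m * cntV (take k p))}"

text \<open>Area w.r.t. diagonal y=(n/m)x: unit squares [i,i+1]x[j,j+1] lying below the path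
  (the horizontal step over column i is at height h > j) and above the diagonal
  (lower-right corner (i+1,j) weakly above: n*(i+1) \<le> m*j).\<close>
definition area :: "nat \<Rightarrow> nat \<Rightarrow> step list \<Rightarrow> nat" where
  "area m n p = card {(i, j). \<exists>k<length p. p ! k = H \<and> i = cntH (take k p)
       \<and> j < cntV (take k p) \<and> n * (i + 1) \<le> m * j}"

definition O_pairs :: "step list \<Rightarrow> (nat \<times> nat) set" where
  "O_pairs p = {(a, b). a < b \<and> b < length p \<and> p ! a = H \<and> p ! b = V}"

definition star :: "step list \<Rightarrow> step list" where
  "star p = concat (map (\<lambda>s. if s = V then [V, H] else [s]) p)"

end

theory Submission
  imports Defs
begin

lemma cntH_simps[simp]: "cntH [] = 0" "cntH (H#p) = Suc (cntH p)" "cntH (V#p) = cntH p"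
  by (auto simp: cntH_def)
lemma cntV_simps[simp]: "cntV [] = 0" "cntV (V#p) = Suc (cntV p)" "cntV (H#p) = cntV p"
  by (auto simp: cntV_def)

lemma star_simps[simp]: "star [] = []" "star (H#p) = H # star p" "star (V#p) = V # H # star p"
  by (auto simp: star_def)

lemma cntV_star[simp]: "cntV (star p) = cntV p"
proof (induction p)
  case (Cons x p) then show ?case by (cases x) auto
qed simp

lemma cntH_star[simp]: "cntH (star p) = cntH p + cntV p"
proof (induction p)
  case (Cons x p) then show ?case by (cases x) auto
qed simp

lemma O_Nil[simp]: "O_pairs [] = {}" by (auto simp: O_pairs_def)

lemma O_Cons: "card (O_pairs (x#p)) = (if x = H then cntV p else 0) + card (O_pairs p)"
proof -
  let ?A = "(if x = H then (\<lambda>b. (0::nat, Suc b)) ` {b. b < length p \<and> p ! b = V} else {})"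
  let ?f = "\<lambda>(a,b). (Suc a, Suc b)"
  have eq: "O_pairs (x#p) = ?A \<union> ?f ` O_pairs p"
  proof (rule set_eqI, clarify)
    fix a b
    show "((a,b) \<in> O_pairs (x#p)) = ((a,b) \<in> ?A \<union> ?f ` O_pairs p)"
    proof (cases a)
      case 0 then show ?thesis
        by (cases b; cases x) (auto simp: O_pairs_def)
    next
      case (Suc a')
      then show ?thesis
        by (cases b) (auto simp: O_pairs_def image_iff)
    qed
  qed
  have fin: "finite (O_pairs p)"
    by (rule finite_subset[of _ "{..<length p} \<times> {..<length p}"]) (auto simp: O_pairs_def)
  have disj: "?A \<inter> ?f ` O_pairs p = {}" by auto
  have inj: "inj_on ?f (O_pairs p)" by (auto simp: inj_on_def)
  have cA: "card ?A = (if x = H then cntV p else 0)"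
    by (auto simp: card_image inj_on_def cntV_def length_filter_conv_card)
  have "card (O_pairs (x#p)) = card ?A + card (?f ` O_pairs p)"
    unfolding eq by (rule card_Un_disjoint) (use fin disj in auto)
  then show ?thesis using cA card_image[OF inj] by simp
qed

lemma O_star: "2 * card (O_pairs (star p)) = 2 * card (O_pairs p) + cntV p * (cntV p - 1)"
proof (induction p)
  case (Cons x p) then show ?case
    by (cases x) (auto simp: O_Cons algebra_simps, cases "cntV p", auto)
qed simp

fun cc :: "step list \<Rightarrow> nat \<Rightarrow> nat" where
  "cc [] j = 0"
| "cc (H#p) j = Suc (cc p j)"
| "cc (V#p) 0 = 0"
| "cc (V#p) (Suc j) = cc p j"

lemma cc_star: "j < cntV p \<Longrightarrow> cc (star p) j = cc p j + j"
proof (induction p arbitrary: j)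
  case Nil then show ?case by simp
next
  case (Cons x p) then show ?case by (cases x; cases j) auto
qed

definition Bs :: "step list \<Rightarrow> (nat \<times> nat) set" where
  "Bs p = {(i, j). \<exists>k<length p. p ! k = H \<and> i = cntH (take k p) \<and> j < cntV (take k p)}"

lemma ex_less_Suc: "(\<exists>k<Suc n. P k) \<longleftrightarrow> P 0 \<or> (\<exists>k<n. P (Suc k))"
  by (metis less_Suc_eq_0_disj)

lemma exH: "(\<exists>k<length p. p ! k = H \<and> i = cntH (take k p)) \<longleftrightarrow> i < cntH p"
proof (induction p arbitrary: i)
  case Nil then show ?case by simp
next
  case (Cons x p) show ?case
  proof (cases x)
    case V then show ?thesis using Cons.IH[of i] by (simp add: ex_less_Suc)
  next
    case H then show ?thesis using Cons.IH by (cases i) (simp_all add: ex_less_Suc)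
  qed
qed

lemma Bs_char: "(i, j) \<in> Bs p \<longleftrightarrow> i < cntH p \<and> j < cntV p \<and> cc p j \<le> i"
proof (induction p arbitrary: i j)
  case Nil then show ?case by (simp add: Bs_def)
next
  case (Cons x p)
  have IH: "\<And>i j. (\<exists>k<length p. p ! k = H \<and> i = cntH (take k p) \<and> j < cntV (take k p))
      \<longleftrightarrow> i < cntH p \<and> j < cntV p \<and> cc p j \<le> i"
    using Cons.IH by (simp add: Bs_def)
  show ?case
  proof (cases x)
    case H
    then show ?thesis
      apply (simp add: Bs_def ex_less_Suc)
      apply (cases i)
       apply simp
      using IH by auto
  next
    case V
    then show ?thesis
      apply (simp add: Bs_def ex_less_Suc)
      apply (cases j)
      using IH exH by auto
  qed
qed

lemma area_Bs: "area m n p = card {(i,j). (i,j) \<in> Bs p \<and> n*(i+1) \<le> m*j}"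
  unfolding area_def Bs_def by (rule arg_cong[where f=card]) auto

lemma area_star:
  assumes "0 < m" "cntH p = m" "cntV p = n"
  shows "area m n p = area (m + n) n (star p)"
proof -
  let ?A = "{(i,j). (i,j) \<in> Bs p \<and> n*(i+1) \<le> m*j}"
  let ?S = "{(i,j). (i,j) \<in> Bs (star p) \<and> n*(i+1) \<le> (m+n)*j}"
  let ?f = "\<lambda>(i::nat,j::nat). (i+j, j)"
  have "?S = ?f ` ?A"
  proof (rule set_eqI, clarify)
    fix x j
    show "((x,j) \<in> ?S) = ((x,j) \<in> ?f ` ?A)"
    proof
      assume "(x,j) \<in> ?S"
      then have h: "x < m + n" "j < n" "cc p j + j \<le> x" "n*(x+1) \<le> (m+n)*j"
        using assms by (auto simp: Bs_char cc_star)
      define i where "i = x - j"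
      have x: "x = i + j" using h(3) i_def by simp
      have c: "n*(i+1) \<le> m*j" using h(4) unfolding x by (simp add: algebra_simps)
      have "m*j < m*n" using h(2) assms(1) by simp
      then have "n*(i+1) < n*m" using c by (metis le_less_trans mult.commute)
      then have "i < m" by (metis Suc_eq_plus1 Suc_lessD mult_less_cancel1)
      then have "(i,j) \<in> ?A" using h c assms x by (auto simp: Bs_char)
      then show "(x,j) \<in> ?f ` ?A" using x by (auto simp: image_iff)
    next
      assume "(x,j) \<in> ?f ` ?A"
      then obtain i where x: "x = i + j" and a: "(i,j) \<in> ?A" by auto
      then show "(x,j) \<in> ?S" using assms
        by (auto simp: Bs_char cc_star algebra_simps)
    qed
  qed
  moreover have "inj_on ?f ?A" by (auto simp: inj_on_def)
  ultimately have "card ?S = card ?A" by (simp add: card_image)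
  then show ?thesis by (simp add: area_Bs)
qed

theorem mainTheorem6:
  fixes m n :: nat and \<gamma> :: "step list"
  assumes "0 < m" "0 < n" "coprime m n" "\<gamma> \<in> dyck m n"
  shows "card (O_pairs (star \<gamma>)) = card (O_pairs \<gamma>) + n * (n - 1) div 2
         \<and> area m n \<gamma> = area (m + n) n (star \<gamma>)"
proof
  have c: "cntH \<gamma> = m" "cntV \<gamma> = n" using assms(4) by (auto simp: dyck_def)
  show "card (O_pairs (star \<gamma>)) = card (O_pairs \<gamma>) + n * (n - 1) div 2"
    using O_star[of \<gamma>] c by simp
  show "area m n \<gamma> = area (m + n) n (star \<gamma>)"
    using area_star[OF assms(1) c] .
qed

end
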